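(* In the setting below, let $I=\{i_A,\dots,i_B\}\subseteq\{0,\dots,n\}$ and $J=\{j_A,\dots,j_B\}\subseteq\{0,\dots,m\}$ be intervals of equal length $|I|=|J|$ such that every point of $I\times J$ is $2\Delta$-relevant. Then there are $a,b,c\in\mathbb{R}$ such that $|f(i)-(a i+b)|\le 2\Delta$ for all $i\in I$ and $|g(j)-(aj+c)|\le 2\Delta$ for all $j\in J$.
   Context: Setting: $f\colon\{0,\dots,n\}\to\mathbb{Z}$, $g\colon\{0,\dots,m\}\to\mathbb{Z}$, and convex functions $\breve f\colon\{0,\dots,n\}\to\mathbb{Q}$, $\breve g\colon\{0,\dots,m\}\to\mathbb{Q}$ (convex: $F(i)-F(i-1)\le F(i+1)-F(i)$ for interior $i$) with $\breve f\le f\le\breve f+\Delta$ and $\breve g\le g\le\breve g+\Delta$ pointwise, for some $\Delta\ge0$. Let $\breve h(k)=\min_{i+j=k}\breve f(i)+\breve g(j)$. A point $(i,j)$ is $\delta$-relevant if $\breve f(i)+\breve g(j)\le\breve h(i+j)+\delta$. *)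

theory Defs
  imports "HOL-Analysis.Analysis"
begin

definition convex_on_upto :: "nat \<Rightarrow> (nat \<Rightarrow> rat) \<Rightarrow> bool" where
  "convex_on_upto n F \<longleftrightarrow>
     (\<forall>i. 0 < i \<and> i < n \<longrightarrow> F i - F (i - 1) \<le> F (i + 1) - F i)"

definition minplus_conv :: "nat \<Rightarrow> nat \<Rightarrow> (nat \<Rightarrow> rat) \<Rightarrow> (nat \<Rightarrow> rat) \<Rightarrow> nat \<Rightarrow> rat" where
  "minplus_conv n m F G k = Min {F i + G j | i j. i \<le> n \<and> j \<le> m \<and> i + j = k}"

definition relevant :: "nat \<Rightarrow> nat \<Rightarrow> (nat \<Rightarrow> rat) \<Rightarrow> (nat \<Rightarrow> rat) \<Rightarrow> rat \<Rightarrow> nat \<Rightarrow> nat \<Rightarrow> bool" where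
  "relevant n m F G \<delta> i j \<longleftrightarrow> F i + G j \<le> minplus_conv n m F G (i + j) + \<delta>"

end

theory Submission
  imports Defs
begin

lemma rel_le:
  assumes "relevant n m F G \<delta> i j" "i' \<le> n" "j' \<le> m" "i' + j' = i + j"
  shows "F i + G j \<le> F i' + G j' + \<delta>"
proof -
  have fin: "finite {F i + G j | i j. i \<le> n \<and> j \<le> m \<and> i + j = k}" for k
  proof (rule finite_subset)
    show "{F i + G j | i j. i \<le> n \<and> j \<le> m \<and> i + j = k} \<subseteq> (\<lambda>(i,j). F i + G j) ` ({..n}\<times>{..m})"
      by auto
  qed auto
  have "minplus_conv n m F G (i+j) \<le> F i' + G j'"
    unfolding minplus_conv_def by (rule Min_le[OF fin]) (use assms in auto)
  thus ?thesis using assms(1) unfolding relevant_def by simp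
qed

lemma conv_mono:
  assumes c: "convex_on_upto n F" shows "p \<le> k \<Longrightarrow> k < n \<Longrightarrow> F (p+1) - F p \<le> F (k+1) - F k"
proof (induction k)
  case 0 thus ?case by simp
next
  case (Suc k)
  show ?case
  proof (cases "p = Suc k")
    case True thus ?thesis by simp
  next
    case False
    hence "p \<le> k" using Suc by simp
    hence "F (p+1) - F p \<le> F (k+1) - F k" using Suc by simp
    moreover have "F (Suc k) - F (Suc k - 1) \<le> F (Suc k + 1) - F (Suc k)"
      using c Suc.prems unfolding convex_on_upto_def by (metis zero_less_Suc)
    ultimately show ?thesis by simp
  qed
qed

lemma glob_up:
  assumes c: "convex_on_upto n F" and "hi \<le> n" and a: "p < hi \<longrightarrow> a \<le> F (p+1) - F p"
  shows "p \<le> i \<Longrightarrow> i \<le> hi \<Longrightarrow> F p - a * of_nat p \<le> F i - a * of_nat i"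
proof (induction i)
  case 0 thus ?case by simp
next
  case (Suc i)
  show ?case
  proof (cases "p = Suc i")
    case True thus ?thesis by simp
  next
    case False
    hence pi: "p \<le> i" using Suc by simp
    have IH: "F p - a * of_nat p \<le> F i - a * of_nat i" using Suc pi by simp
    have "F (p+1) - F p \<le> F (i+1) - F i" using conv_mono[OF c pi] Suc assms(2) by simp
    moreover have "a \<le> F (p+1) - F p" using a pi Suc by simp
    ultimately have "a \<le> F (Suc i) - F i" by simp
    thus ?thesis using IH by (simp add: algebra_simps)
  qed
qed

lemma glob_down:
  assumes c: "convex_on_upto n F" and "p \<le> n" and a: "lo < p \<longrightarrow> F p - F (p-1) \<le> a"
  shows "k \<le> p - lo \<Longrightarrow> F p - a * of_nat p \<le> F (p-k) - a * of_nat (p-k)"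
proof (induction k)
  case 0 thus ?case by simp
next
  case (Suc k)
  define i where "i = p - Suc k"
  have ip: "i + 1 = p - k" "i < p" "lo < p" using Suc.prems unfolding i_def by auto
  have IH: "F p - a * of_nat p \<le> F (i+1) - a * of_nat (i+1)" using Suc ip by simp
  have "F (i+1) - F i \<le> F ((p-1)+1) - F (p-1)"
    using conv_mono[OF c, of i "p-1"] ip assms(2) by simp
  also have "\<dots> = F p - F (p-1)" using ip by simp
  also have "\<dots> \<le> a" using a ip by simp
  finally have "F (i+1) - F i \<le> a" .
  hence "F (i+1) - a * of_nat (i+1) \<le> F i - a * of_nat i" by (simp add: algebra_simps)
  thus ?case using IH unfolding i_def by simp
qed

lemma glob:
  assumes c: "convex_on_upto n F" and "lo \<le> p" "p \<le> hi" "hi \<le> n" "lo \<le> i" "i \<le> hi"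
    and a1: "lo < p \<longrightarrow> F p - F (p-1) \<le> a" and a2: "p < hi \<longrightarrow> a \<le> F (p+1) - F p"
  shows "F p - a * of_nat p \<le> F i - a * of_nat i"
proof (cases "p \<le> i")
  case True thus ?thesis using glob_up[OF c assms(4) a2] assms by simp
next
  case False
  have "F p - a * of_nat p \<le> F (p-(p-i)) - a * of_nat (p-(p-i))"
    using glob_down[OF c _ a1, of "p-i"] assms False by simp
  thus ?thesis using False by simp
qed

theorem mainTheorem14:
  fixes f g :: "nat \<Rightarrow> int" and fb gb :: "nat \<Rightarrow> rat" and n m :: nat and \<Delta> :: rat
    and iA iB jA jB :: nat
  assumes convf: "convex_on_upto n fb" and convg: "convex_on_upto m gb"
    and Delta_nonneg: "\<Delta> \<ge> 0"
    and f_lo: "\<And>i. i \<le> n \<Longrightarrow> fb i \<le> of_int (f i)"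
    and f_hi: "\<And>i. i \<le> n \<Longrightarrow> of_int (f i) \<le> fb i + \<Delta>"
    and g_lo: "\<And>j. j \<le> m \<Longrightarrow> gb j \<le> of_int (g j)"
    and g_hi: "\<And>j. j \<le> m \<Longrightarrow> of_int (g j) \<le> gb j + \<Delta>"
    and I_sub: "iA \<le> iB" "iB \<le> n"
    and J_sub: "jA \<le> jB" "jB \<le> m"
    and same_len: "iB - iA = jB - jA"
    and rel: "\<And>i j. i \<in> {iA..iB} \<Longrightarrow> j \<in> {jA..jB} \<Longrightarrow> relevant n m fb gb (2 * \<Delta>) i j"
  shows "\<exists>a b c :: real.
           (\<forall>i\<in>{iA..iB}. \<bar>real_of_int (f i) - (a * real i + b)\<bar> \<le> 2 * real_of_rat \<Delta>) \<and>
           (\<forall>j\<in>{jA..jB}. \<bar>real_of_int (g j) - (a * real j + c)\<bar> \<le> 2 * real_of_rat \<Delta>)"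
proof -
  define S where "S = iA + jB"
  have SJ: "i \<in> {iA..iB} \<Longrightarrow> S - i \<in> {jA..jB} \<and> i + (S - i) = S" for i
    using I_sub J_sub same_len unfolding S_def by auto
  define \<phi> where "\<phi> i = fb i + gb (S - i)" for i
  define M where "M = Min (\<phi> ` {iA..iB})"
  have "M \<in> \<phi> ` {iA..iB}" unfolding M_def using I_sub by (intro Min_in) auto
  then obtain p where p: "p \<in> {iA..iB}" "\<phi> p = M" by auto
  have pmin: "i \<in> {iA..iB} \<Longrightarrow> \<phi> p \<le> \<phi> i" for i unfolding p(2) M_def by auto
  define q where "q = S - p"
  have q: "q \<in> {jA..jB}" "p + q = S" using SJ[OF p(1)] unfolding q_def by auto
  have eq1: "iA < p \<longleftrightarrow> q < jB" "p < iB \<longleftrightarrow> jA < q"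
    using p q I_sub J_sub same_len unfolding S_def by auto
  have opt1: "iA < p \<Longrightarrow> fb p + gb q \<le> fb (p-1) + gb (q+1)"
  proof -
    assume h: "iA < p"
    have "\<phi> p \<le> \<phi> (p-1)" using pmin h p by (intro pmin) auto
    moreover have "S - (p-1) = q+1" using h q by auto
    ultimately show ?thesis unfolding \<phi>_def q_def by (simp only:)
  qed
  have opt2: "p < iB \<Longrightarrow> fb p + gb q \<le> fb (p+1) + gb (q-1)"
  proof -
    assume h: "p < iB"
    have "\<phi> p \<le> \<phi> (p+1)" using pmin h p by auto
    moreover have "S - (p+1) = q-1" using h q by auto
    ultimately show ?thesis unfolding \<phi>_def q_def by simp
  qed
  have cf: "iA < p \<Longrightarrow> p < iB \<Longrightarrow> fb p - fb (p-1) \<le> fb (p+1) - fb p"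
    using convf I_sub unfolding convex_on_upto_def by auto
  have cg: "jA < q \<Longrightarrow> q < jB \<Longrightarrow> gb q - gb (q-1) \<le> gb (q+1) - gb q"
    using convg J_sub unfolding convex_on_upto_def by auto
  obtain a where A1: "iA < p \<longrightarrow> fb p - fb (p-1) \<le> a"
    and A2: "p < iB \<longrightarrow> a \<le> fb (p+1) - fb p"
    and A3: "jA < q \<longrightarrow> gb q - gb (q-1) \<le> a"
    and A4: "q < jB \<longrightarrow> a \<le> gb (q+1) - gb q"
  proof (cases "iA < p")
    case T1: True
    show ?thesis
    proof (cases "p < iB")
      case True
      show ?thesis
      proof (rule that[of "max (fb p - fb (p-1)) (gb q - gb (q-1))"])
        have h: "jA < q" "q < jB" using T1 True eq1 by auto
        have o1: "fb p + gb q \<le> fb (p-1) + gb (q+1)" using opt1 T1 by blast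
        have o2: "fb p + gb q \<le> fb (p+1) + gb (q-1)" using opt2 True by blast
        have c1: "fb p - fb (p-1) \<le> fb (p+1) - fb p" using cf T1 True by blast
        have c2: "gb q - gb (q-1) \<le> gb (q+1) - gb q" using cg h by blast
        show "iA < p \<longrightarrow> fb p - fb (p-1) \<le> max (fb p - fb (p-1)) (gb q - gb (q-1))" by simp
        show "jA < q \<longrightarrow> gb q - gb (q-1) \<le> max (fb p - fb (p-1)) (gb q - gb (q-1))" by simp
        show "p < iB \<longrightarrow> max (fb p - fb (p-1)) (gb q - gb (q-1)) \<le> fb (p+1) - fb p"
          using c1 o2 by simp
        show "q < jB \<longrightarrow> max (fb p - fb (p-1)) (gb q - gb (q-1)) \<le> gb (q+1) - gb q"
          using c2 o1 by simp
      qed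
    next
      case False
      show ?thesis
        apply (rule that[of "fb p - fb (p-1)"])
        using T1 False opt1 eq1 by auto
    qed
  next
    case F1: False
    show ?thesis
    proof (cases "p < iB")
      case True
      show ?thesis
        apply (rule that[of "fb (p+1) - fb p"])
        using F1 True opt2 eq1 by auto
    next
      case False
      show ?thesis
        apply (rule that[of 0])
        using F1 False eq1 by auto
    qed
  qed
  have lowF: "i \<in> {iA..iB} \<Longrightarrow> fb p - a * of_nat p \<le> fb i - a * of_nat i" for i
    using glob[OF convf, of iA p iB i a] p I_sub A1 A2 by auto
  have lowG: "j \<in> {jA..jB} \<Longrightarrow> gb q - a * of_nat q \<le> gb j - a * of_nat j" for j
    using glob[OF convg, of jA q jB j a] q J_sub A3 A4 by auto
  have pn: "p \<le> n" "q \<le> m" using p q I_sub J_sub by auto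
  have upF: "fb i - a * of_nat i \<le> fb p - a * of_nat p + 2*\<Delta>" if i: "i \<in> {iA..iB}" for i
  proof -
    define j where "j = S - i"
    have j: "j \<in> {jA..jB}" "i + j = S" using SJ[OF i] unfolding j_def by auto
    have "fb i + gb j \<le> fb p + gb q + 2*\<Delta>"
      using rel_le[OF rel[OF i j(1)] pn] j q by simp
    moreover have "gb q - a * of_nat q \<le> gb j - a * of_nat j" using lowG j by simp
    moreover have "a * of_nat i + a * of_nat j = a * of_nat p + a * (of_nat q::rat)"
      using j q by (metis distrib_left of_nat_add)
    ultimately show ?thesis by linarith
  qed
  have upG: "gb j - a * of_nat j \<le> gb q - a * of_nat q + 2*\<Delta>" if j: "j \<in> {jA..jB}" for j
  proof -
    define i where "i = S - j"
    have i: "i \<in> {iA..iB}" "i + j = S" using j I_sub J_sub same_len unfolding i_def S_def by auto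
    have "fb i + gb j \<le> fb p + gb q + 2*\<Delta>"
      using rel_le[OF rel[OF i(1) j] pn] i q by simp
    moreover have "fb p - a * of_nat p \<le> fb i - a * of_nat i" using lowF i by simp
    moreover have "a * of_nat i + a * of_nat j = a * of_nat p + a * (of_nat q::rat)"
      using i q by (metis distrib_left of_nat_add)
    ultimately show ?thesis by linarith
  qed
  define b where "b = fb p - a * of_nat p + 3/2*\<Delta>"
  define c where "c = gb q - a * of_nat q + 3/2*\<Delta>"
  have RF: "\<bar>of_int (f i) - (a * of_nat i + b)\<bar> \<le> 2*\<Delta>" if i: "i \<in> {iA..iB}" for i
  proof -
    have "i \<le> n" using i I_sub by auto
    thus ?thesis using lowF[OF i] upF[OF i] f_lo[of i] f_hi[of i] Delta_nonneg unfolding b_def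
      by (simp add: abs_le_iff)
  qed
  have RG: "\<bar>of_int (g j) - (a * of_nat j + c)\<bar> \<le> 2*\<Delta>" if j: "j \<in> {jA..jB}" for j
  proof -
    have "j \<le> m" using j J_sub by auto
    thus ?thesis using lowG[OF j] upG[OF j] g_lo[of j] g_hi[of j] Delta_nonneg unfolding c_def
      by (simp add: abs_le_iff)
  qed
  show ?thesis
  proof (intro exI conjI ballI)
    fix i assume i: "i \<in> {iA..iB}"
    have "of_rat \<bar>of_int (f i) - (a * of_nat i + b)\<bar> \<le> (of_rat (2*\<Delta>) :: real)"
      using RF[OF i] of_rat_less_eq by blast
    moreover have "(of_rat \<bar>of_int (f i) - (a * of_nat i + b)\<bar> :: real) = \<bar>real_of_int (f i) - (of_rat a * real i + of_rat b)\<bar>"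
      by (simp only: abs_of_rat[symmetric] of_rat_add of_rat_diff of_rat_mult of_rat_of_int_eq of_rat_of_nat_eq)
    ultimately show "\<bar>real_of_int (f i) - (of_rat a * real i + of_rat b)\<bar> \<le> 2 * real_of_rat \<Delta>"
      by (simp add: of_rat_mult)
  next
    fix j assume j: "j \<in> {jA..jB}"
    have "of_rat \<bar>of_int (g j) - (a * of_nat j + c)\<bar> \<le> (of_rat (2*\<Delta>) :: real)"
      using RG[OF j] of_rat_less_eq by blast
    moreover have "(of_rat \<bar>of_int (g j) - (a * of_nat j + c)\<bar> :: real) = \<bar>real_of_int (g j) - (of_rat a * real j + of_rat c)\<bar>"
      by (simp only: abs_of_rat[symmetric] of_rat_add of_rat_diff of_rat_mult of_rat_of_int_eq of_rat_of_nat_eq)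
    ultimately show "\<bar>real_of_int (g j) - (of_rat a * real j + of_rat c)\<bar> \<le> 2 * real_of_rat \<Delta>"
      by (simp add: of_rat_mult)
  qed
qed

end
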